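(* For every $A\subseteq\Omega$, $$\mu^*(A) = \inf\Big\{c\in(0,1]: \liminf_{t\to\infty} cE_t\ge \mathbf{1}_A \text{ pointwise on }\Omega\Big\} = \inf\Big\{c\in(0,1]: \sup_{t\in\mathbb{N}_0} cE_t\ge \mathbf{1}_A\text{ pointwise on }\Omega\Big\},$$ where in each infimum $c$ ranges over $(0,1]$ and $(E_t)_{t\in\mathbb{N}_0}$ ranges over all $\mathcal{P}$-e-processes (i.e. the infimum is over all $c$ for which some $\mathcal{P}$-e-process satisfies the displayed inequality).
   Context: Standing setup: $(\Omega, (\mathcal{F}_t)_{t\in\mathbb{N}_0}, \mathcal{F})$ is a filtered measurable space with $\mathcal{F} = \sigma\big(\bigcup_{t} \mathcal{F}_t\big)$. A stopping time is a map $\tau:\Omega\to\mathbb{N}_0\cup\{\infty\}$ with $\{\tau \le t\}\in\mathcal{F}_t$ for all $t$; $\mathcal{T}$ denotes the set of all stopping times. $\mathcal{P}$ is an arbitrary family of probability measures on $\mathcal{F}$. The inverse-capital measure is defined for every $A\subseteq\Omega$ by $\mu^*(A) = \inf_{\tau\in\mathcal{T}:\, A\subseteq\{\tau<\infty\}} \sup_{\mathbb{P}\in\mathcal{P}} \mathbb{P}(\tau<\infty)$. A $\mathcal{P}$-e-process is a nonnegative (possibly $[0,\infty]$-valued) process $(E_t)_{t\in\mathbb{N}_0}$ adapted to $(\mathcal{F}_t)$ such that $\mathbb{E}_{\mathbb{P}}[E_\tau]\le 1$ for every $\mathbb{P}\in\mathcal{P}$ and every $\tau\in\mathcal{T}$,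 with the convention $E_\infty=\limsup_{t\to\infty}E_t$. *)

theory Defs
  imports "HOL-Probability.Probability"
begin

definition filtered_space :: "'a set \<Rightarrow> (nat \<Rightarrow> 'a set set) \<Rightarrow> bool" where
  "filtered_space \<Omega> F \<longleftrightarrow> (\<forall>t. sigma_algebra \<Omega> (F t)) \<and> (\<forall>s t. s \<le> t \<longrightarrow> F s \<subseteq> F t)"

definition F_infty :: "'a set \<Rightarrow> (nat \<Rightarrow> 'a set set) \<Rightarrow> 'a set set" where
  "F_infty \<Omega> F = sigma_sets \<Omega> (\<Union>t. F t)"

definition prob_family :: "'a set \<Rightarrow> (nat \<Rightarrow> 'a set set) \<Rightarrow> 'a measure set \<Rightarrow> bool" where
  "prob_family \<Omega> F Ps \<longleftrightarrow>
     (\<forall>P\<in>Ps. prob_space P \<and> space P = \<Omega> \<and> sets P = F_infty \<Omega> F)"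

definition stopping_time_on :: "'a set \<Rightarrow> (nat \<Rightarrow> 'a set set) \<Rightarrow> ('a \<Rightarrow> enat) \<Rightarrow> bool" where
  "stopping_time_on \<Omega> F \<tau> \<longleftrightarrow> (\<forall>t::nat. {\<omega>\<in>\<Omega>. \<tau> \<omega> \<le> enat t} \<in> F t)"

definition inv_capital :: "'a set \<Rightarrow> (nat \<Rightarrow> 'a set set) \<Rightarrow> 'a measure set \<Rightarrow> 'a set \<Rightarrow> ennreal" where
  "inv_capital \<Omega> F Ps A =
     (INF \<tau>\<in>{\<tau>. stopping_time_on \<Omega> F \<tau> \<and> A \<subseteq> {\<omega>\<in>\<Omega>. \<tau> \<omega> < \<infinity>}}.
        SUP P\<in>Ps. emeasure P {\<omega>\<in>\<Omega>. \<tau> \<omega> < \<infinity>})"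

definition stopped_value :: "(nat \<Rightarrow> 'a \<Rightarrow> ennreal) \<Rightarrow> ('a \<Rightarrow> enat) \<Rightarrow> 'a \<Rightarrow> ennreal" where
  "stopped_value E \<tau> \<omega> =
     (case \<tau> \<omega> of enat n \<Rightarrow> E n \<omega> | \<infinity> \<Rightarrow> limsup (\<lambda>t. E t \<omega>))"

definition e_process :: "'a set \<Rightarrow> (nat \<Rightarrow> 'a set set) \<Rightarrow> 'a measure set \<Rightarrow> (nat \<Rightarrow> 'a \<Rightarrow> ennreal) \<Rightarrow> bool" where
  "e_process \<Omega> F Ps E \<longleftrightarrow>
     (\<forall>t. E t \<in> borel_measurable (sigma \<Omega> (F t))) \<and>
     (\<forall>P\<in>Ps. \<forall>\<tau>. stopping_time_on \<Omega> F \<tau> \<longrightarrow> (\<integral>\<^sup>+ \<omega>. stopped_value E \<tau> \<omega> \<partial>P) \<le> 1)"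

end

theory Submission
  imports Defs
begin

lemma sa_F: "filtered_space \<Omega> F \<Longrightarrow> sigma_algebra \<Omega> (F t)"
  by (simp add: filtered_space_def)

lemma sets_sig: "filtered_space \<Omega> F \<Longrightarrow> sets (sigma \<Omega> (F t)) = F t"
  using sigma_algebra.sets_measure_of_eq[OF sa_F] by blast

lemma space_sig: "filtered_space \<Omega> F \<Longrightarrow> space (sigma \<Omega> (F t)) = \<Omega>"
  using sigma_algebra.space_measure_of_eq[OF sa_F] by blast

lemma F_sub_P: "prob_family \<Omega> F Ps \<Longrightarrow> P \<in> Ps \<Longrightarrow> F t \<subseteq> sets P"
  unfolding prob_family_def F_infty_def by (auto intro: sigma_sets.Basic)

lemma space_P: "prob_family \<Omega> F Ps \<Longrightarrow> P \<in> Ps \<Longrightarrow> space P = \<Omega>"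
  unfolding prob_family_def by auto

lemma meas_E:
  fixes E :: "nat \<Rightarrow> 'a \<Rightarrow> ennreal"
  assumes fs: "filtered_space \<Omega> F" and pf: "prob_family \<Omega> F Ps" and P: "P \<in> Ps"
    and m: "E t \<in> borel_measurable (sigma \<Omega> (F t))"
  shows "E t \<in> borel_measurable P"
proof -
  have "measurable (sigma \<Omega> (F t)) (borel :: ennreal measure) \<subseteq> measurable P borel"
    by (rule measurable_mono) (simp_all add: sets_sig[OF fs] space_sig[OF fs] F_sub_P[OF pf P] space_P[OF pf P])
  with m show ?thesis by blast
qed

lemma hard:
  fixes E :: "nat \<Rightarrow> 'a \<Rightarrow> ennreal" and c :: ennreal
  assumes fs: "filtered_space \<Omega> F" and pf: "prob_family \<Omega> F Ps"
    and c1: "c \<le> 1" and ep: "e_process \<Omega> F Ps E"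
    and cov: "\<forall>\<omega>\<in>\<Omega>. indicator A \<omega> \<le> (SUP t. c * E t \<omega>)" and AO: "A \<subseteq> \<Omega>"
  shows "inv_capital \<Omega> F Ps A \<le> c"
proof (rule ennreal_le_epsilon)
  fix e :: real assume e: "0 < e"
  define r where "r = ennreal (1/(1+e))"
  define Q where "Q t \<omega> \<longleftrightarrow> r < c * E t \<omega>" for t \<omega>
  define \<tau> where "\<tau> \<omega> = (if \<exists>t. Q t \<omega> then enat (LEAST t. Q t \<omega>) else \<infinity>)" for \<omega>
  have Em: "E t \<in> borel_measurable (sigma \<Omega> (F t))" for t
    using ep unfolding e_process_def by blast
  have QF: "{\<omega>\<in>\<Omega>. Q s \<omega>} \<in> F s" for s
  proof -
    note [measurable] = Em[of s]
    have "{\<omega>\<in>space (sigma \<Omega> (F s)). r < c * E s \<omega>} \<in> sets (sigma \<Omega> (F s))"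
      by measurable
    thus ?thesis unfolding Q_def using sets_sig[OF fs] space_sig[OF fs] by simp
  qed
  have mono: "s \<le> t \<Longrightarrow> F s \<subseteq> F t" for s t using fs unfolding filtered_space_def by blast
  have st: "stopping_time_on \<Omega> F \<tau>"
    unfolding stopping_time_on_def
  proof
    fix t :: nat
    have eq: "{\<omega>\<in>\<Omega>. \<tau> \<omega> \<le> enat t} = (\<Union>s\<in>{..t}. {\<omega>\<in>\<Omega>. Q s \<omega>})"
    proof (intro equalityI subsetI)
      fix \<omega> assume "\<omega> \<in> {\<omega>\<in>\<Omega>. \<tau> \<omega> \<le> enat t}"
      then have "\<omega> \<in> \<Omega>" "\<tau> \<omega> \<le> enat t" by auto
      then have ex: "\<exists>t. Q t \<omega>" and le: "(LEAST t. Q t \<omega>) \<le> t"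
        unfolding \<tau>_def by (auto split: if_splits)
      then show "\<omega> \<in> (\<Union>s\<in>{..t}. {\<omega>\<in>\<Omega>. Q s \<omega>})"
        using \<open>\<omega> \<in> \<Omega>\<close> LeastI_ex[OF ex] by auto
    next
      fix \<omega> assume "\<omega> \<in> (\<Union>s\<in>{..t}. {\<omega>\<in>\<Omega>. Q s \<omega>})"
      then obtain s where "\<omega> \<in> \<Omega>" "s \<le> t" "Q s \<omega>" by auto
      then show "\<omega> \<in> {\<omega>\<in>\<Omega>. \<tau> \<omega> \<le> enat t}"
        unfolding \<tau>_def using Least_le[of "\<lambda>t. Q t \<omega>" s] by auto
    qed
    have "(\<Union>s\<in>{..t}. {\<omega>\<in>\<Omega>. Q s \<omega>}) \<in> F t"
      using ring_of_sets.finite_UN[OF algebra.axioms(1)[OF sigma_algebra.axioms(1)[OF sa_F[OF fs]]], of "{..t}" "\<lambda>s. {\<omega>\<in>\<Omega>. Q s \<omega>}" t]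
        QF mono by auto
    then show "{\<omega>\<in>\<Omega>. \<tau> \<omega> \<le> enat t} \<in> F t" using eq by simp
  qed
  have r1: "r < 1" unfolding r_def using e by (simp add: ennreal_lessI)
  have cover: "A \<subseteq> {\<omega>\<in>\<Omega>. \<tau> \<omega> < \<infinity>}"
  proof
    fix \<omega> assume "\<omega> \<in> A"
    then have "\<omega> \<in> \<Omega>" using AO by auto
    with cov \<open>\<omega> \<in> A\<close> have "1 \<le> (SUP t. c * E t \<omega>)" by force
    with r1 have "r < (SUP t. c * E t \<omega>)" by simp
    then obtain t where "Q t \<omega>" unfolding Q_def less_SUP_iff by auto
    then show "\<omega> \<in> {\<omega>\<in>\<Omega>. \<tau> \<omega> < \<infinity>}" using \<open>\<omega> \<in> \<Omega>\<close> unfolding \<tau>_def by auto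
  qed
  define k where "k = ennreal (1+e) * c"
  have rk: "ennreal (1+e) * r = 1"
  proof -
    have "ennreal (1+e) * r = ennreal ((1+e) * (1/(1+e)))"
      unfolding r_def using e by (intro ennreal_mult[symmetric]) auto
    also have "(1+e) * (1/(1+e)) = 1" using e by simp
    finally show ?thesis by simp
  qed
  have bound: "emeasure P {\<omega>\<in>\<Omega>. \<tau> \<omega> < \<infinity>} \<le> k" if P: "P \<in> Ps" for P
  proof -
    note [measurable] = meas_E[OF fs pf P Em]
    define S where "S = {\<omega>\<in>\<Omega>. \<exists>t. Q t \<omega>}"
    have Seq: "{\<omega>\<in>\<Omega>. \<tau> \<omega> < \<infinity>} = S" unfolding S_def \<tau>_def by auto
    have Sm: "S \<in> sets P"
    proof -
      have "{\<omega>\<in>space P. \<exists>t. r < c * E t \<omega>} \<in> sets P" by measurable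
      thus ?thesis unfolding S_def Q_def using space_P[OF pf P] by simp
    qed
    define h where "h \<omega> = (SUP n. indicator {\<omega>. Q n \<omega> \<and> (\<forall>m<n. \<not> Q m \<omega>)} \<omega> * E n \<omega>)" for \<omega>
    have hm: "h \<in> borel_measurable P"
    proof -
      have "(\<lambda>\<omega>. indicator {\<omega>. r < c * E n \<omega> \<and> (\<forall>m<n. \<not> r < c * E m \<omega>)} \<omega> * E n \<omega>)
            \<in> borel_measurable P" for n
        by measurable
      then show ?thesis unfolding h_def Q_def by measurable
    qed
    have least: "Q n \<omega> \<Longrightarrow> (\<forall>m<n. \<not> Q m \<omega>) \<Longrightarrow> (LEAST t. Q t \<omega>) = n" for n \<omega>
      by (rule Least_equality) (auto simp: not_less[symmetric])
    have h_le: "h \<omega> \<le> stopped_value E \<tau> \<omega>" for \<omega>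
      unfolding h_def
    proof (rule SUP_least)
      fix n
      show "indicator {\<omega>. Q n \<omega> \<and> (\<forall>m<n. \<not> Q m \<omega>)} \<omega> * E n \<omega> \<le> stopped_value E \<tau> \<omega>"
      proof (cases "Q n \<omega> \<and> (\<forall>m<n. \<not> Q m \<omega>)")
        case True
        then have "\<tau> \<omega> = enat n" unfolding \<tau>_def using least by auto
        then show ?thesis using True by (simp add: stopped_value_def)
      qed simp
    qed
    have ind_le: "indicator S \<omega> \<le> k * h \<omega>" if "\<omega> \<in> space P" for \<omega>
    proof (cases "\<omega> \<in> S")
      case True
      then have ex: "\<exists>t. Q t \<omega>" unfolding S_def by auto
      define n where "n = (LEAST t. Q t \<omega>)"
      have Qn: "Q n \<omega>" unfolding n_def by (rule LeastI_ex[OF ex])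
      have nm: "\<forall>m<n. \<not> Q m \<omega>" unfolding n_def using not_less_Least by blast
      have "E n \<omega> \<le> h \<omega>" unfolding h_def
        by (rule SUP_upper2[of n]) (use Qn nm in auto)
      have "1 = ennreal (1+e) * r" using rk by simp
      also have "\<dots> \<le> ennreal (1+e) * (c * E n \<omega>)"
        using Qn unfolding Q_def by (intro mult_left_mono) auto
      also have "\<dots> = k * E n \<omega>" unfolding k_def by (simp add: mult.assoc)
      also have "\<dots> \<le> k * h \<omega>" using \<open>E n \<omega> \<le> h \<omega>\<close> by (intro mult_left_mono) auto
      finally show ?thesis using True by simp
    qed simp
    have "emeasure P {\<omega>\<in>\<Omega>. \<tau> \<omega> < \<infinity>} = (\<integral>\<^sup>+\<omega>. indicator S \<omega> \<partial>P)"
      using Seq Sm by simp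
    also have "\<dots> \<le> (\<integral>\<^sup>+\<omega>. k * h \<omega> \<partial>P)"
      by (rule nn_integral_mono) (rule ind_le)
    also have "\<dots> = k * (\<integral>\<^sup>+\<omega>. h \<omega> \<partial>P)" by (rule nn_integral_cmult[OF hm])
    also have "\<dots> \<le> k * (\<integral>\<^sup>+\<omega>. stopped_value E \<tau> \<omega> \<partial>P)"
      by (intro mult_left_mono nn_integral_mono h_le) auto
    also have "\<dots> \<le> k * 1"
      using ep P st unfolding e_process_def by (intro mult_left_mono) auto
    finally show ?thesis by simp
  qed
  have "inv_capital \<Omega> F Ps A \<le> (SUP P\<in>Ps. emeasure P {\<omega>\<in>\<Omega>. \<tau> \<omega> < \<infinity>})"
    unfolding inv_capital_def by (rule INF_lower) (use st cover in auto)
  also have "\<dots> \<le> k" by (rule SUP_least) (rule bound)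
  also have "k \<le> c + ennreal e"
  proof -
    have "k = c + ennreal e * c" unfolding k_def using e
      by (simp add: ennreal_plus[symmetric] distrib_right)
    also have "\<dots> \<le> c + ennreal e * 1" using c1 by (intro add_left_mono mult_left_mono) auto
    finally show ?thesis by simp
  qed
  finally show "inv_capital \<Omega> F Ps A \<le> c + ennreal e" .
qed

lemma easy:
  fixes c :: ennreal
  assumes fs: "filtered_space \<Omega> F" and pf: "prob_family \<Omega> F Ps"
    and st: "stopping_time_on \<Omega> F \<tau>" and cover: "A \<subseteq> {\<omega>\<in>\<Omega>. \<tau> \<omega> < \<infinity>}"
    and c0: "0 < c" and c1: "c \<le> 1"
    and sc: "(SUP P\<in>Ps. emeasure P {\<omega>\<in>\<Omega>. \<tau> \<omega> < \<infinity>}) \<le> c"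
  shows "\<exists>E. e_process \<Omega> F Ps E \<and>
                   (\<forall>\<omega>\<in>\<Omega>. indicator A \<omega> \<le> liminf (\<lambda>t. c * E t \<omega>))"
proof -
  define d where "d = 1 / c"
  have cd: "c * d = 1" using c0 c1
  proof -
    have "c < top" using c1 by (simp add: order.strict_trans1 ennreal_one_less_top)
    have "c * d = c * 1 / c" unfolding d_def by (rule ennreal_times_divide)
    also have "\<dots> = c / c" by simp
    also have "\<dots> = 1" using c0 \<open>c < top\<close> by (intro ennreal_divide_self) auto
    finally show ?thesis .
  qed
  define E where "E t \<omega> = d * indicator {\<omega>\<in>\<Omega>. \<tau> \<omega> \<le> enat t} \<omega>" for t \<omega>
  have stF: "{\<omega>\<in>\<Omega>. \<tau> \<omega> \<le> enat t} \<in> F t" for t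
    using st unfolding stopping_time_on_def by blast
  define S where "S = {\<omega>\<in>\<Omega>. \<tau> \<omega> < \<infinity>}"
  have Seq: "S = (\<Union>n. {\<omega>\<in>\<Omega>. \<tau> \<omega> \<le> enat n})"
  proof -
    have "x < \<infinity> \<longleftrightarrow> (\<exists>n. x \<le> enat n)" for x :: enat by (cases x) auto
    then show ?thesis unfolding S_def by auto
  qed
  have meas: "E t \<in> borel_measurable (sigma \<Omega> (F t))" for t
  proof -
    have [measurable]: "{\<omega>\<in>\<Omega>. \<tau> \<omega> \<le> enat t} \<in> sets (sigma \<Omega> (F t))"
      using stF sets_sig[OF fs] by simp
    show ?thesis unfolding E_def by measurable
  qed
  have bnd: "(\<integral>\<^sup>+ \<omega>. stopped_value E \<sigma> \<omega> \<partial>P) \<le> 1"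
    if P: "P \<in> Ps" and "stopping_time_on \<Omega> F \<sigma>" for P \<sigma>
  proof -
    have Sm: "S \<in> sets P"
    proof -
      have "(\<Union>n. {\<omega>\<in>\<Omega>. \<tau> \<omega> \<le> enat n}) \<in> sets P"
        using stF F_sub_P[OF pf P] by (intro sets.countable_UN) auto
      thus ?thesis using Seq by simp
    qed
    have Et: "E t \<omega> \<le> d * indicator S \<omega>" for t \<omega>
    proof (cases "\<omega> \<in> {\<omega>\<in>\<Omega>. \<tau> \<omega> \<le> enat t}")
      case True
      then have "\<omega> \<in> S" unfolding S_def by (cases "\<tau> \<omega>") auto
      then show ?thesis using True unfolding E_def by simp
    qed (simp add: E_def)
    have pt: "stopped_value E \<sigma> \<omega> \<le> d * indicator S \<omega>" for \<omega>
    proof (cases "\<sigma> \<omega>")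
      case (enat n) then show ?thesis using Et by (simp add: stopped_value_def)
    next
      case infinity
      then show ?thesis unfolding stopped_value_def
        by (simp add: Limsup_bounded Et)
    qed
    have "(\<integral>\<^sup>+ \<omega>. stopped_value E \<sigma> \<omega> \<partial>P) \<le> (\<integral>\<^sup>+ \<omega>. d * indicator S \<omega> \<partial>P)"
      by (intro nn_integral_mono pt)
    also have "\<dots> = d * emeasure P S" using Sm by (simp add: nn_integral_cmult_indicator)
    also have "\<dots> \<le> d * c"
    proof (rule mult_left_mono)
      have "emeasure P S \<le> (SUP P\<in>Ps. emeasure P {\<omega>\<in>\<Omega>. \<tau> \<omega> < \<infinity>})"
        unfolding S_def using P by (rule SUP_upper)
      then show "emeasure P S \<le> c" using sc by (rule order.trans)
    qed simp
    also have "\<dots> = 1" using cd by (simp add: mult.commute)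
    finally show ?thesis .
  qed
  have ep: "e_process \<Omega> F Ps E" unfolding e_process_def using meas bnd by blast
  have lim: "indicator A \<omega> \<le> liminf (\<lambda>t. c * E t \<omega>)" if "\<omega> \<in> \<Omega>" for \<omega>
  proof (cases "\<omega> \<in> A")
    case True
    then obtain n where n: "\<tau> \<omega> = enat n" using cover by (cases "\<tau> \<omega>") auto
    have "eventually (\<lambda>t. c * E t \<omega> = 1) sequentially"
      unfolding eventually_sequentially
      by (rule exI[of _ n]) (use n that cd in \<open>auto simp: E_def\<close>)
    then have "liminf (\<lambda>t. c * E t \<omega>) = liminf (\<lambda>t. 1::ennreal)"
      by (rule Liminf_eq)
    also have "\<dots> = 1" by (rule Liminf_const) simp
    finally show ?thesis using True by simp
  qed simp
  show ?thesis using ep lim by blast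
qed

theorem mainTheorem5:
  fixes \<Omega> :: "'a set" and F :: "nat \<Rightarrow> 'a set set" and Ps :: "'a measure set" and A :: "'a set"
  assumes "filtered_space \<Omega> F"
    and "prob_family \<Omega> F Ps"
    and "A \<subseteq> \<Omega>"
  shows "inv_capital \<Omega> F Ps A =
           Inf {c :: ennreal. 0 < c \<and> c \<le> 1 \<and>
              (\<exists>E. e_process \<Omega> F Ps E \<and>
                   (\<forall>\<omega>\<in>\<Omega>. indicator A \<omega> \<le> liminf (\<lambda>t. c * E t \<omega>)))}
       \<and> inv_capital \<Omega> F Ps A =
           Inf {c :: ennreal. 0 < c \<and> c \<le> 1 \<and>
              (\<exists>E. e_process \<Omega> F Ps E \<and>
                   (\<forall>\<omega>\<in>\<Omega>. indicator A \<omega> \<le> (SUP t. c * E t \<omega>)))}"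
    (is "?m = Inf ?Sl \<and> ?m = Inf ?Ss")
proof -
  note fs = assms(1) and pf = assms(2) and AO = assms(3)
  have sub: "?Sl \<subseteq> ?Ss"
  proof
    fix c assume "c \<in> ?Sl"
    then obtain E where c: "0 < c" "c \<le> 1" "e_process \<Omega> F Ps E"
      "\<forall>\<omega>\<in>\<Omega>. indicator A \<omega> \<le> liminf (\<lambda>t. c * E t \<omega>)" by blast
    have "liminf (\<lambda>t. c * E t \<omega>) \<le> (SUP t. c * E t \<omega>)" for \<omega>
      unfolding liminf_SUP_INF by (intro SUP_mono) (auto intro: INF_lower2)
    with c(4) have "\<forall>\<omega>\<in>\<Omega>. indicator A \<omega> \<le> (SUP t. c * E t \<omega>)"
      using order.trans by fast
    then show "c \<in> ?Ss" using c(1,2,3) by (intro CollectI conjI exI[of _ E]) auto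
  qed
  have a: "Inf ?Ss \<le> Inf ?Sl" using sub by (rule Inf_superset_mono)
  have b: "?m \<le> Inf ?Ss"
  proof (rule Inf_greatest)
    fix c assume "c \<in> ?Ss"
    then obtain E where c: "c \<le> 1" "e_process \<Omega> F Ps E"
      "\<forall>\<omega>\<in>\<Omega>. indicator A \<omega> \<le> (SUP t. c * E t \<omega>)" by blast
    show "?m \<le> c" by (rule hard[OF fs pf c(1) c(2) c(3) AO])
  qed
  have c: "Inf ?Sl \<le> ?m"
    unfolding inv_capital_def
  proof (rule INF_greatest)
    fix \<tau> assume "\<tau> \<in> {\<tau>. stopping_time_on \<Omega> F \<tau> \<and> A \<subseteq> {\<omega>\<in>\<Omega>. \<tau> \<omega> < \<infinity>}}"
    then have st: "stopping_time_on \<Omega> F \<tau>" and cov: "A \<subseteq> {\<omega>\<in>\<Omega>. \<tau> \<omega> < \<infinity>}" by auto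
    define s where "s = (SUP P\<in>Ps. emeasure P {\<omega>\<in>\<Omega>. \<tau> \<omega> < \<infinity>})"
    have s1: "s \<le> 1" unfolding s_def
    proof (rule SUP_least)
      fix P assume "P \<in> Ps"
      then have "prob_space P" using pf unfolding prob_family_def by blast
      then show "emeasure P {\<omega>\<in>\<Omega>. \<tau> \<omega> < \<infinity>} \<le> 1"
        by (simp add: prob_space_imp_subprob_space subprob_space.subprob_emeasure_le_1)
    qed
    show "Inf ?Sl \<le> s"
    proof (rule ennreal_le_epsilon)
      fix e :: real assume e: "0 < e"
      define c where "c = min (s + ennreal e) 1"
      have "0 < ennreal e" using e by simp
      moreover have "ennreal e \<le> s + ennreal e" by (simp add: add_increasing)
      ultimately have p: "0 < s + ennreal e" by (rule less_le_trans)
      have c0: "0 < c" unfolding c_def using p by (auto simp: min_def)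
      have c1: "c \<le> 1" unfolding c_def by simp
      have sc: "s \<le> c" unfolding c_def using s1 by simp
      obtain E where E: "e_process \<Omega> F Ps E"
         "\<forall>\<omega>\<in>\<Omega>. indicator A \<omega> \<le> liminf (\<lambda>t. c * E t \<omega>)"
        using easy[OF fs pf st cov c0 c1] sc unfolding s_def by blast
      have "c \<in> ?Sl" using c0 c1 E by (intro CollectI conjI exI[of _ E]) auto
      then have "Inf ?Sl \<le> c" by (rule Inf_lower)
      also have "c \<le> s + ennreal e" unfolding c_def by simp
      finally show "Inf ?Sl \<le> s + ennreal e" .
    qed
  qed
  have e1: "?m = Inf ?Ss" by (rule order.antisym[OF b order.trans[OF a c]])
  have e2: "?m = Inf ?Sl" by (rule order.antisym[OF order.trans[OF b a] c])
  show ?thesis by (intro conjI e2 e1)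
qed

end
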